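(* Let $W$ be $\{0,1\}$-valued, $x\in\mathbb X$, $\preceq$ a total order on $\{X\Subset\mathbb X\mid x\in X\}$, and for each $e\in\mathfrak h(x)$ a total order (also $\preceq$) on $e'=e\setminus\{x\}$. Let $e\in\mathfrak h(x)$, $x'\in e'$, and $y\in\mathbb X$ such that $\{y\}\notin\mathfrak h_e/e'_{\prec x'}$. Then \[ \deg_{\mathfrak h_e/e'_{\prec x'}}(y)\le\deg_{\mathfrak h}(y), \] and if additionally $x\neq y$ or $\{x\}\notin\mathfrak h$, then also $\{y\}\notin\mathfrak h$.
   Context: $\mathbb X$ is a finite or countably infinite set; $e\Subset\mathbb X$ means finite subset. $W:\{X\Subset\mathbb X\}\to\{0,1\}$ and $\mathfrak h=\{e\Subset\mathbb X\mid W(e)=0\}$. For a set $\mathfrak g$ of finite subsets of $\mathbb X$ and $y\in\mathbb X$, $\mathfrak g(y)=\{e\in\mathfrak g\mid y\in e\}$ and $\deg_{\mathfrak g}(y)=|\mathfrak g(y)|\in\{0,1,\dots\}\cup\{\infty\}$. For a set $\mathfrak g$ of finite subsets and $B\Subset\mathbb X$, define $\mathfrak g/B=\{e\setminus B\mid e\in\mathfrak g\}\cup\{\{y\}\mid y\in B\}$ (this is the set of $e$ with $W_{\mathfrak g}(e\mid B)=0$ for the hard-core interaction $W_{\mathfrak g}=\mathbf 1_{\{\cdot\notin\mathfrak g\}}$ and the conditional interaction $W(X\mid B)=\prod_{C\subset B}W(X\cup C)$ if $X\cap B=\varnothing$, $0$ if $X=\{y\}$ with $y\in B$, $1$ otherwise).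 For $e\in\mathfrak h(x)$ let \[ \mathfrak h_e=\{b\setminus\{x\}\mid b\in\mathfrak h(x),\ b\prec e\}\cup\big(\mathfrak h\setminus(\mathfrak h(x)\setminus\{e\})\big), \] where $\prec$ is the strict part of $\preceq$; and for $x'\in e'$, $e'_{\prec x'}=\{x''\in e'\mid x''\prec x'\}$. *)

theory Defs
  imports Main "HOL-Library.Extended_Nat" "HOL-Library.Countable"
begin

definition hset :: "('a set \<Rightarrow> nat) \<Rightarrow> 'a set set" where
  "hset W = {e. finite e \<and> W e = 0}"

definition edges_at :: "'a set set \<Rightarrow> 'a \<Rightarrow> 'a set set" where
  "edges_at g y = {e \<in> g. y \<in> e}"

definition deg :: "'a set set \<Rightarrow> 'a \<Rightarrow> enat" where
  "deg g y = (if finite (edges_at g y) then enat (card (edges_at g y)) else \<infinity>)"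

definition hquot :: "'a set set \<Rightarrow> 'a set \<Rightarrow> 'a set set" where
  "hquot g B = {e - B | e. e \<in> g} \<union> {{y} | y. y \<in> B}"

definition h_e :: "'a set set \<Rightarrow> 'a \<Rightarrow> 'a set rel \<Rightarrow> 'a set \<Rightarrow> 'a set set" where
  "h_e h x R e = {b - {x} | b. b \<in> edges_at h x \<and> (b, e) \<in> R \<and> b \<noteq> e}
                 \<union> (h - (edges_at h x - {e}))"

definition below :: "'a set \<Rightarrow> 'a rel \<Rightarrow> 'a \<Rightarrow> 'a set" where
  "below e' r x' = {x'' \<in> e'. (x'', x') \<in> r \<and> x'' \<noteq> x'}"

end

theory Submission
  imports Defs
begin

lemma deg_le_image:
  assumes "edges_at A y \<subseteq> f ` edges_at G y"
  shows "deg A y \<le> deg G y"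
proof (cases "finite (edges_at G y)")
  case True
  then have "finite (edges_at A y)" using assms finite_surj by blast
  moreover have "card (edges_at A y) \<le> card (edges_at G y)"
    using True assms by (meson card_image_le card_mono finite_imageI le_trans)
  ultimately show ?thesis using True by (simp add: deg_def)
next
  case False
  then show ?thesis by (simp add: deg_def)
qed

theorem corollary5p4:
  fixes W :: "'a::countable set \<Rightarrow> nat"
    and x x' y :: 'a
    and R :: "'a set rel"
    and Ord :: "'a set \<Rightarrow> 'a rel"
    and e :: "'a set"
  assumes W01: "\<forall>X. finite X \<longrightarrow> W X \<in> {0, 1}"
    and R_total: "linear_order_on {X. finite X \<and> x \<in> X} R"
    and Ord_total: "\<forall>b \<in> edges_at (hset W) x. linear_order_on (b - {x}) (Ord b)"
    and e_in: "e \<in> edges_at (hset W) x"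
    and x'_in: "x' \<in> e - {x}"
    and y_not: "{y} \<notin> hquot (h_e (hset W) x R e) (below (e - {x}) (Ord e) x')"
  shows "deg (hquot (h_e (hset W) x R e) (below (e - {x}) (Ord e) x')) y \<le> deg (hset W) y
         \<and> ((x \<noteq> y \<or> {x} \<notin> hset W) \<longrightarrow> {y} \<notin> hset W)"
proof
  define B where "B = below (e - {x}) (Ord e) x'"
  define h where "h = hset W"
  have yB: "y \<notin> B" using y_not unfolding B_def hquot_def by blast
  define \<phi> where "\<phi> c = (if c \<in> edges_at h x \<and> c \<noteq> e then c - {x} - B else c - B)" for c
  have sub: "edges_at (hquot (h_e h x R e) B) y \<subseteq> \<phi> ` edges_at h y"
  proof
    fix g assume g: "g \<in> edges_at (hquot (h_e h x R e) B) y"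
    then have yg: "y \<in> g" by (simp add: edges_at_def)
    from g yB obtain f where f: "f \<in> h_e h x R e" "g = f - B"
      unfolding edges_at_def hquot_def by auto
    show "g \<in> \<phi> ` edges_at h y"
    proof (cases "f \<in> h - (edges_at h x - {e})")
      case True
      then have "\<phi> f = g" using f by (auto simp: \<phi>_def)
      moreover have "f \<in> edges_at h y" using True f yg by (auto simp: edges_at_def)
      ultimately show ?thesis by blast
    next
      case False
      then obtain b where b: "b \<in> edges_at h x" "b \<noteq> e" "f = b - {x}"
        using f(1) unfolding h_e_def by blast
      then have "\<phi> b = g" using f by (auto simp: \<phi>_def)
      moreover have "b \<in> edges_at h y" using b f yg by (auto simp: edges_at_def)
      ultimately show ?thesis by blast
    qed
  qed
  show "deg (hquot (h_e (hset W) x R e) (below (e - {x}) (Ord e) x')) y \<le> deg (hset W) y"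
    by (rule deg_le_image[OF sub[unfolded B_def h_def]])
  show "(x \<noteq> y \<or> {x} \<notin> hset W) \<longrightarrow> {y} \<notin> hset W"
  proof
    assume a: "x \<noteq> y \<or> {x} \<notin> hset W"
    show "{y} \<notin> hset W"
    proof
      assume yh: "{y} \<in> hset W"
      then have "x \<noteq> y" using a by blast
      then have "{y} \<in> h - (edges_at h x - {e})" using yh unfolding edges_at_def h_def by simp
      then have "{y} \<in> h_e h x R e" unfolding h_e_def by (rule UnI2)
      then have "{y} - B \<in> hquot (h_e h x R e) B" unfolding hquot_def by blast
      moreover have "{y} - B = {y}" using yB by blast
      ultimately show False using y_not unfolding B_def h_def by simp
    qed
  qed
qed

end
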